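(* Let $\mathcal{G}$ be a connected simple undirected graph on $N$ nodes with Laplacian $L\in\mathbb{R}^{N\times N}$. Consider the system $\dot x(t)=u(t)$, $x(0)=x_0\in\mathbb{R}^N$, and the cost functional $$J(x_0,u)=\int_0^\infty x^\top(t)Qx(t)+u^\top(t)Ru(t)\,dt,$$ where $Q\in\mathbb{R}^{N\times N}$ is symmetric with $Q\ge 0$ and $R\in\mathbb{R}^{N\times N}$ is symmetric with $R>0$. Suppose that $J(x_0,u)<\infty$ for all $x_0\in\mathbb{R}^N$ and all control laws of the form $u=-gLx$ with $g>0$. Then there exists a symmetric positive semi-definite matrix $W\in\mathbb{R}^{N\times N}$ such that $Q=LWL$.
   Context: For a graph with node set $\{1,\dots,N\}$, the adjacency matrix is $A=[a_{ij}]$ with $a_{ij}=1$ if $(j,i)$ is an edge and $a_{ij}=0$ otherwise; the degree matrix is $D=\mathrm{diag}(d_1,\dots,d_N)$ with $d_i=\sum_j a_{ij}$; the Laplacian is $L=D-A$. The graph is simple (no self-loops), undirected (so $L$ is symmetric) and connected. *)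

theory Defs
  imports "HOL-Analysis.Analysis"
begin

text \<open>Graphs on the finite node type 'n (N = CARD('n)), given by an edge relation
  E; E j i means that (j,i) is an edge.\<close>

definition simple_undirected_graph :: "('n::finite \<Rightarrow> 'n \<Rightarrow> bool) \<Rightarrow> bool" where
  "simple_undirected_graph E \<longleftrightarrow> (\<forall>i. \<not> E i i) \<and> (\<forall>i j. E i j \<longrightarrow> E j i)"

definition connected_graph :: "('n::finite \<Rightarrow> 'n \<Rightarrow> bool) \<Rightarrow> bool" where
  "connected_graph E \<longleftrightarrow> (\<forall>i j. (i, j) \<in> {(a, b). E a b}\<^sup>*)"

definition adjacency_matrix :: "('n::finite \<Rightarrow> 'n \<Rightarrow> bool) \<Rightarrow> real^'n^'n" where
  "adjacency_matrix E = (\<chi> i j. if E j i then 1 else 0)"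

definition degree_matrix :: "('n::finite \<Rightarrow> 'n \<Rightarrow> bool) \<Rightarrow> real^'n^'n" where
  "degree_matrix E = (\<chi> i j. if i = j then (\<Sum>k\<in>UNIV. adjacency_matrix E $ i $ k) else 0)"

definition laplacian :: "('n::finite \<Rightarrow> 'n \<Rightarrow> bool) \<Rightarrow> real^'n^'n" where
  "laplacian E = degree_matrix E - adjacency_matrix E"

definition psd_matrix :: "real^'n^'n \<Rightarrow> bool" where
  "psd_matrix M \<longleftrightarrow> transpose M = M \<and> (\<forall>x. 0 \<le> x \<bullet> (M *v x))"

definition pd_matrix :: "real^'n^'n \<Rightarrow> bool" where
  "pd_matrix M \<longleftrightarrow> transpose M = M \<and> (\<forall>x. x \<noteq> 0 \<longrightarrow> 0 < x \<bullet> (M *v x))"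

definition closed_loop_traj ::
  "real^'n^'n \<Rightarrow> real \<Rightarrow> real^'n \<Rightarrow> (real \<Rightarrow> real^'n) \<Rightarrow> bool" where
  "closed_loop_traj L g x0 x \<longleftrightarrow> x 0 = x0 \<and>
     (\<forall>t\<ge>0. (x has_vector_derivative (- (g *s (L *v x t)))) (at t within {0..}))"

text \<open>J(x0,u) < oo for a nonnegative integrand: integrable on [0,oo).\<close>
definition finite_cost ::
  "real^'n^'n \<Rightarrow> real^'n^'n \<Rightarrow> (real \<Rightarrow> real^'n) \<Rightarrow> (real \<Rightarrow> real^'n) \<Rightarrow> bool" where
  "finite_cost Q R x u \<longleftrightarrow>
     (\<lambda>t. x t \<bullet> (Q *v x t) + u t \<bullet> (R *v u t)) integrable_on {0..}"

end

theory Submission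
  imports Defs
begin


lemma deg_ent: "degree_matrix E $ i $ j = (if i = j then (\<Sum>k\<in>UNIV. if E k i then 1 else 0) else 0)"
proof -
  have "\<And>i. (\<Sum>k\<in>UNIV. adjacency_matrix E $ i $ k) = (\<Sum>k\<in>UNIV. if E k i then 1 else 0)"
    by (rule sum.cong) (simp_all add: adjacency_matrix_def)
  then show ?thesis by (simp add: degree_matrix_def)
qed

lemma lap_ent: "laplacian E $ i $ j = (if i = j then (\<Sum>k\<in>UNIV. if E k i then 1 else 0) else 0) - (if E j i then 1 else 0)"
  by (simp add: laplacian_def deg_ent adjacency_matrix_def)

lemma lap_row:
  "(laplacian E *v x) $ i = (\<Sum>j\<in>UNIV. (if E j i then 1 else 0) * (x$i - x$j))"
proof -
  have h: "(\<Sum>j\<in>UNIV. (if i = j then D else 0) * x$j) = D * x$i" for D :: real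
  proof -
    have "(\<Sum>j\<in>UNIV. (if i = j then D else 0) * x$j) = (\<Sum>j\<in>UNIV. if i = j then D * x$j else 0)"
      by (rule sum.cong) auto
    then show ?thesis by simp
  qed
  have "(laplacian E *v x) $ i = (\<Sum>j\<in>UNIV. ((if i = j then (\<Sum>k\<in>UNIV. (if E k i then 1 else 0)) else 0) - (if E j i then 1 else 0)) * x$j)"
    by (simp add: lap_ent matrix_vector_mult_def)
  also have "\<dots> = (\<Sum>k\<in>UNIV. (if E k i then 1 else 0)) * x$i - (\<Sum>j\<in>UNIV. (if E j i then 1 else 0) * x$j)"
    by (simp add: left_diff_distrib sum_subtractf h)
  also have "\<dots> = (\<Sum>j\<in>UNIV. (if E j i then 1 else 0) * (x$i - x$j))"
    by (simp add: right_diff_distrib sum_subtractf sum_distrib_right)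
  finally show ?thesis .
qed

lemma lap_one: "laplacian E *v (\<chi> i. 1) = 0"
  by (simp add: vec_eq_iff lap_row)


lemma lap_sym:
  assumes "simple_undirected_graph E"
  shows "transpose (laplacian E) = laplacian E"
proof -
  have s: "E i j \<longleftrightarrow> E j i" for i j using assms unfolding simple_undirected_graph_def by blast
  show ?thesis
    unfolding vec_eq_iff transpose_def
    by (auto simp: lap_ent s)
qed


lemma lap_quad:
  assumes "simple_undirected_graph E"
  shows "2 * (x \<bullet> (laplacian E *v x)) = (\<Sum>i\<in>UNIV. \<Sum>j\<in>UNIV. (if E j i then 1 else 0) * (x$i - x$j)^2)"
proof -
  let ?a = "\<lambda>i j. (if E j i then 1 else 0) :: real"
  have S: "x \<bullet> (laplacian E *v x) = (\<Sum>i\<in>UNIV. \<Sum>j\<in>UNIV. ?a i j * (x$i * (x$i - x$j)))"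
    by (simp add: inner_vec_def lap_row sum_distrib_left mult_ac)
  also have "\<dots> = (\<Sum>j\<in>UNIV. \<Sum>i\<in>UNIV. ?a i j * (x$i * (x$i - x$j)))"
    by (rule sum.swap)
  also have "\<dots> = (\<Sum>j\<in>UNIV. \<Sum>i\<in>UNIV. ?a j i * (x$i * (x$i - x$j)))"
    using assms unfolding simple_undirected_graph_def
    by (intro sum.cong refl) (metis)
  finally have S2: "x \<bullet> (laplacian E *v x) = (\<Sum>j\<in>UNIV. \<Sum>i\<in>UNIV. ?a j i * (x$i * (x$i - x$j)))" .
  have "2 * (x \<bullet> (laplacian E *v x)) = (\<Sum>i\<in>UNIV. \<Sum>j\<in>UNIV. ?a i j * (x$i * (x$i - x$j))) + (\<Sum>i\<in>UNIV. \<Sum>j\<in>UNIV. ?a i j * (x$j * (x$j - x$i)))"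
    using S S2 by simp
  also have "\<dots> = (\<Sum>i\<in>UNIV. \<Sum>j\<in>UNIV. ?a i j * (x$i - x$j)^2)"
    by (simp add: sum.distrib[symmetric] power2_eq_square algebra_simps)
  finally show ?thesis .
qed


lemma sym_dot:
  assumes "transpose Q = Q"
  shows "x \<bullet> (Q *v y) = (Q *v x) \<bullet> (y::real^'n)"
proof -
  have "x \<bullet> (Q *v y) = (x v* Q) \<bullet> y" by (rule dot_lmul_matrix[symmetric])
  also have "x v* Q = Q *v x" using vector_transpose_matrix[of x Q] assms by simp
  finally show ?thesis .
qed


lemma psd_null:
  assumes "psd_matrix Q" "x \<bullet> (Q *v x) = 0"
  shows "Q *v x = (0::real^'n)"
proof -
  have sym: "transpose Q = Q" and nn: "\<And>z. 0 \<le> z \<bullet> (Q *v z)" using assms(1) unfolding psd_matrix_def by auto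
  define y where "y = Q *v x"
  have key: "0 \<le> - 2 * t * (y \<bullet> y) + t^2 * (y \<bullet> (Q *v y))" for t
  proof -
    have "0 \<le> (x - t *\<^sub>R y) \<bullet> (Q *v (x - t *\<^sub>R y))" by (rule nn)
    also have "\<dots> = x \<bullet> (Q *v x) - t * (x \<bullet> (Q *v y)) - t * (y \<bullet> (Q *v x)) + t^2 * (y \<bullet> (Q *v y))"
      by (simp add: algebra_simps inner_diff_left inner_diff_right power2_eq_square matrix_vector_mult_scaleR)
    also have "x \<bullet> (Q *v y) = y \<bullet> y" using sym_dot[OF sym, of x y] y_def by simp
    finally show ?thesis using assms(2) y_def by simp
  qed
  have "y \<bullet> y = 0"
  proof (cases "y \<bullet> (Q *v y) = 0")
    case True
    have "0 \<le> - 2 * 1 * (y \<bullet> y) + 1^2 * (y \<bullet> (Q *v y))" by (rule key)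
    with True have "y \<bullet> y \<le> 0" by simp
    then show ?thesis using inner_ge_zero[of y] by (rule order_antisym)
  next
    case False
    then have a: "y \<bullet> (Q *v y) > 0" using nn[of y] by simp
    define t where "t = (y \<bullet> y) / (y \<bullet> (Q *v y))"
    have "0 \<le> - 2 * t * (y \<bullet> y) + t^2 * (y \<bullet> (Q *v y))" by (rule key)
    also have "\<dots> = - ((y \<bullet> y)^2 / (y \<bullet> (Q *v y)))"
      using a by (simp add: t_def power2_eq_square field_simps)
    finally have "(y \<bullet> y)^2 / (y \<bullet> (Q *v y)) \<le> 0" by simp
    moreover have "(y \<bullet> y)^2 / (y \<bullet> (Q *v y)) \<ge> 0" using a by simp
    ultimately have "(y \<bullet> y)^2 = 0" using a by (simp add: divide_le_0_iff)
    then show ?thesis by simp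
  qed
  then show ?thesis using y_def by simp
qed


lemma const_integrable_zero:
  assumes "(\<lambda>t::real. c) integrable_on {0..}" "c \<ge> (0::real)"
  shows "c = 0"
proof (rule ccontr)
  assume "c \<noteq> 0"
  then have c: "c > 0" using assms(2) by simp
  define I where "I = integral {0..} (\<lambda>t::real. c)"
  define n where "n = I / c + 1"
  have "integral {0..n} (\<lambda>t::real. c) \<le> I"
    unfolding I_def by (rule integral_subset_le) (use assms c in auto)
  moreover have "n \<ge> 0"
  proof -
    have "0 \<le> I" unfolding I_def by (rule integral_nonneg) (use assms in auto)
    then show ?thesis using c by (simp add: n_def)
  qed
  ultimately have "n * c \<le> I" by simp
  moreover have "n * c = I + c" using c by (simp add: n_def field_simps)
  ultimately show False using c by simp
qed



lemma add_rdistrib: "((A::real^'n^'m) + B) ** C = A ** C + B ** C"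
  by (simp add: matrix_matrix_mult_def vec_eq_iff sum.distrib algebra_simps)

lemma transpose_add: "transpose ((A::real^'n^'m) + B) = transpose A + transpose B"
  by (simp add: transpose_def vec_eq_iff)

lemma mul_J_right: "(A::real^'n^'m) ** (\<chi> i j. 1) = (\<chi> i j. (A *v (\<chi> i. 1))$i)"
  by (simp add: matrix_matrix_mult_def matrix_vector_mult_def vec_eq_iff)

lemma J_J: "((\<chi> i j. 1)::real^'n^'n) ** (\<chi> i j. 1) = real CARD('n) *\<^sub>R (\<chi> i j. 1)"
  by (simp add: matrix_matrix_mult_def vec_eq_iff)

lemma transpose_J: "transpose ((\<chi> i j. 1)::real^'n^'n) = (\<chi> i j. 1)"
  by (simp add: transpose_def vec_eq_iff)

lemma lap_nonneg:
  assumes "simple_undirected_graph E"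
  shows "0 \<le> x \<bullet> (laplacian E *v x)"
proof -
  have "0 \<le> (\<Sum>i\<in>UNIV. \<Sum>j\<in>UNIV. (if E j i then 1 else 0) * (x$i - x$j)^2)"
    by (intro sum_nonneg) simp
  then show ?thesis using lap_quad[OF assms, of x] by simp
qed

lemma lap_zero_const:
  assumes "simple_undirected_graph E" "connected_graph E" "x \<bullet> (laplacian E *v x) = 0"
  shows "x$i = x$j"
proof -
  have "(\<Sum>i\<in>UNIV. \<Sum>j\<in>UNIV. (if E j i then 1 else 0) * (x$i - x$j)^2) = 0"
    using lap_quad[OF assms(1), of x] assms(3) by simp
  then have z: "\<forall>i\<in>UNIV. (\<Sum>j\<in>UNIV. (if E j i then 1 else 0) * (x$i - x$j)^2) = 0"
    by (subst sum_nonneg_eq_0_iff[symmetric]) (auto intro!: sum_nonneg)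
  have edge: "x$b = x$c" if "E b c" for b c
  proof -
    have "\<forall>j\<in>UNIV. (if E j c then 1 else 0) * (x$c - x$j)^2 = (0::real)"
      using z by (subst sum_nonneg_eq_0_iff[symmetric]) auto
    then have "(x$c - x$b)^2 = 0" using that by force
    then show ?thesis by simp
  qed
  have "(i, j) \<in> {(a, b). E a b}\<^sup>*" using assms(2) unfolding connected_graph_def by blast
  then show ?thesis
  proof (induction rule: rtrancl_induct)
    case base then show ?case by simp
  next
    case (step b c) then show ?case using edge by auto
  qed
qed

lemma M_inj:
  fixes x :: "real^'n"
  assumes "simple_undirected_graph E" "connected_graph E"
    and "(laplacian E + (\<chi> i j. 1)) *v x = 0"
  shows "x = 0"
proof -
  define s where "s = (\<Sum>j\<in>UNIV. x$j)"
  have Jx: "(\<chi> i j. (1::real)) *v x = (\<chi> i. s)"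
    by (simp add: matrix_vector_mult_def s_def vec_eq_iff)
  have xJx: "x \<bullet> ((\<chi> i j. (1::real)) *v x) = s^2"
    by (simp add: Jx inner_vec_def s_def power2_eq_square sum_distrib_right)
  have "0 = x \<bullet> ((laplacian E + (\<chi> i j. 1)) *v x)" using assms(3) by simp
  also have "\<dots> = x \<bullet> (laplacian E *v x) + s^2"
    by (simp add: matrix_vector_mult_add_rdistrib inner_add_right xJx)
  finally have eq: "x \<bullet> (laplacian E *v x) + s^2 = 0" by simp
  have nn: "0 \<le> x \<bullet> (laplacian E *v x)" by (rule lap_nonneg[OF assms(1)])
  have "s^2 = 0" using eq nn zero_le_power2[of s] by linarith
  then have s0: "s = 0" by simp
  have q0: "x \<bullet> (laplacian E *v x) = 0" using eq s0 by simp
  obtain k :: 'n where True by simp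
  have allk: "x$j = x$k" for j using lap_zero_const[OF assms(1,2) q0] .
  have "s = (\<Sum>j::'n\<in>UNIV. x$k)" unfolding s_def by (rule sum.cong[OF refl], rule allk)
  then have "s = real CARD('n) * x$k" by simp
  then have "x$k = 0" using s0 by simp
  then show ?thesis using allk by (simp add: vec_eq_iff)
qed

theorem lemma1:
  fixes E :: "'n::finite \<Rightarrow> 'n \<Rightarrow> bool"
    and Q R :: "real^'n^'n"
  assumes "simple_undirected_graph E"
    and "connected_graph E"
    and "psd_matrix Q"
    and "pd_matrix R"
    and "\<forall>x0 g x. g > 0 \<longrightarrow> closed_loop_traj (laplacian E) g x0 x \<longrightarrow>
           finite_cost Q R x (\<lambda>t. - (g *s (laplacian E *v x t)))"
  shows "\<exists>W. psd_matrix W \<and> Q = laplacian E ** W ** laplacian E"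
proof -
  define L where "L = laplacian E"
  define one :: "real^'n" where "one = (\<chi> i. 1)"
  define J :: "real^'n^'n" where "J = (\<chi> i j. 1)"
  have Lone: "L *v one = 0" unfolding L_def one_def by (rule lap_one)
  have traj: "closed_loop_traj L 1 one (\<lambda>t. one)"
    unfolding closed_loop_traj_def using Lone by simp
  then have "finite_cost Q R (\<lambda>t. one) (\<lambda>t. - (1 *s (L *v one)))"
    using assms(5)[rule_format, of 1 one "\<lambda>t. one"] traj unfolding L_def by simp
  then have int: "(\<lambda>t::real. one \<bullet> (Q *v one)) integrable_on {0..}"
    unfolding finite_cost_def using Lone by simp
  have "0 \<le> one \<bullet> (Q *v one)" using assms(3) unfolding psd_matrix_def by blast
  then have "one \<bullet> (Q *v one) = 0" by (rule const_integrable_zero[OF int])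
  then have Qone: "Q *v one = 0" by (rule psd_null[OF assms(3)])
  have Qsym: "transpose Q = Q" using assms(3) unfolding psd_matrix_def by blast
  have Lsym: "transpose L = L" unfolding L_def by (rule lap_sym[OF assms(1)])
  have Jsym: "transpose J = J" unfolding J_def by (rule transpose_J)
  define M where "M = L + J"
  have Msym: "transpose M = M" unfolding M_def by (simp add: transpose_add Lsym Jsym)
  have "\<forall>x. M *v x = 0 \<longrightarrow> x = 0"
    using M_inj[OF assms(1,2)] unfolding M_def L_def J_def by blast
  then obtain B where BM: "B ** M = mat 1" using matrix_left_invertible_ker by blast
  then have MB: "M ** B = mat 1" using matrix_left_right_inverse by blast
  have "transpose B ** M = mat 1"
    using arg_cong[OF MB, of transpose] by (simp add: matrix_transpose_mul Msym)
  then have Bsym: "transpose B = B"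
    by (metis BM MB matrix_mul_assoc matrix_mul_lid matrix_mul_rid)
  have LJ: "L ** J = 0" unfolding J_def mul_J_right using Lone unfolding one_def
    by (simp add: vec_eq_iff)
  have QJ: "Q ** J = 0" unfolding J_def mul_J_right using Qone unfolding one_def
    by (simp add: vec_eq_iff)
  have "J ** Q = transpose (Q ** J)" by (simp add: matrix_transpose_mul Qsym Jsym)
  then have JQ: "J ** Q = 0" by (simp add: QJ transpose_def vec_eq_iff)
  define c where "c = real CARD('n)"
  have c: "c > 0" unfolding c_def by simp
  have JJ: "J ** J = c *\<^sub>R J" unfolding J_def c_def by (rule J_J)
  have MJ: "M ** J = c *\<^sub>R J" unfolding M_def by (simp add: add_rdistrib LJ JJ)
  have "J = B ** (M ** J)" by (simp add: matrix_mul_assoc BM)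
  also have "\<dots> = c *\<^sub>R (B ** J)" by (simp add: MJ matrix_scalar_ac scalar_matrix_assoc)
  finally have "(1/c) *\<^sub>R J = (1/c) *\<^sub>R (c *\<^sub>R (B ** J))" by simp
  then have BJ: "B ** J = (1/c) *\<^sub>R J" using c by simp
  have JB: "J ** B = (1/c) *\<^sub>R J"
    using arg_cong[OF BJ, of transpose]
    by (simp add: matrix_transpose_mul Bsym Jsym transpose_scalar)
  define W where "W = B ** Q ** B"
  have WJ: "W ** J = 0"
    unfolding W_def by (simp add: matrix_mul_assoc[symmetric] BJ matrix_scalar_ac scalar_matrix_assoc[symmetric] QJ)
  have WM: "W ** M = B ** Q"
    unfolding W_def by (simp add: matrix_mul_assoc[symmetric] BM)
  have WL: "W ** L = B ** Q"
    using WM unfolding M_def by (simp add: matrix_add_ldistrib WJ)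
  have JBQ: "J ** (B ** Q) = 0"
    by (simp add: matrix_mul_assoc JB scalar_matrix_assoc[symmetric] JQ)
  have MBQ: "M ** (B ** Q) = Q" by (simp add: matrix_mul_assoc MB)
  have LBQ: "L ** (B ** Q) = Q" using MBQ unfolding M_def by (simp add: add_rdistrib JBQ)
  have eq: "Q = L ** W ** L" by (simp add: matrix_mul_assoc[symmetric] WL LBQ)
  have "psd_matrix W"
    unfolding psd_matrix_def
  proof
    show "transpose W = W" unfolding W_def
      by (simp add: matrix_transpose_mul Bsym Qsym matrix_mul_assoc)
    show "\<forall>x. 0 \<le> x \<bullet> (W *v x)"
    proof
      fix x :: "real^'n"
      have "x \<bullet> (W *v x) = x \<bullet> (B *v (Q *v (B *v x)))"
        unfolding W_def by (simp add: matrix_vector_mul_assoc matrix_mul_assoc)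
      also have "\<dots> = (B *v x) \<bullet> (Q *v (B *v x))" by (rule sym_dot[OF Bsym])
      also have "\<dots> \<ge> 0" using assms(3) unfolding psd_matrix_def by blast
      finally show "0 \<le> x \<bullet> (W *v x)" .
    qed
  qed
  then show ?thesis using eq unfolding L_def by blast
qed

end
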